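(* Let $(Y,D)$ be binary random variables and $Z$ a random vector with support $\mathrm{Supp}(Z)$. (1) (Validity.) If $(Y_0,Y_1)$ is a pair of binary random variables with $(Y_0,Y_1)$ independent of $Z$ and $(Y,D,Y_0,Y_1)$ satisfying the binary Roy model (or the alternative binary Roy model for some latent $(Y_0^\ast,Y_1^\ast)$ with $(Y_0,Y_1)$ independent of $Z$), then for almost all $z\in\mathrm{Supp}(Z)$: $$0\le \mathbb P(Y_0=1,Y_1=0)\le \mathbb P(Y=1,D=0\mid Z=z),\quad 0\le \mathbb P(Y_0=0,Y_1=1)\le \mathbb P(Y=1,D=1\mid Z=z),\quad \mathbb P(Y_0=0,Y_1=0)=\mathbb P(Y=0).$$ (2) (Sharpness.) Suppose $Y$ is independent of $Z$. If $(p_{00},p_{01},p_{10})$ satisfies $0\le p_{10}\le \mathbb P(Y=1,D=0\mid Z=z)$, $0\le p_{01}\le \mathbb P(Y=1,D=1\mid Z=z)$ for almost all $z\in\mathrm{Supp}(Z)$ and $p_{00}=\mathbb P(Y=0)$, then there exist random variables $(\tilde Y,\tilde D,\tilde Z,Y_0,Y_1)$ on some probability space with $(\tilde Y,\tilde D,\tilde Z)$ distributed as $(Y,D,Z)$, $(Y_0,Y_1)$ binary and independent of $\tilde Z$, $(\tilde Y,\tilde D,Y_0,Y_1)$ satisfying the binary Roy model (hence also the alternative binary Roy model), and $\mathbb P(Y_0=0,Y_1=0)=p_{00}$, $\mathbb P(Y_0=0,Y_1=1)=p_{01}$, $\mathbb P(Y_0=1,Y_1=0)=p_{10}$.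
   Context: All random variables are defined on a common probability space. Binary Roy model: $Y_0,Y_1\in\{0,1\}$, $Y=Y_1D+Y_0(1-D)$, and almost surely $Y_1>Y_0\Rightarrow D=1$, $Y_1<Y_0\Rightarrow D=0$. Alternative binary Roy model: $Y=Y_1D+Y_0(1-D)$, $Y_d=1\{Y_d^\ast>0\}$ for real random variables $(Y_0^\ast,Y_1^\ast)$, and almost surely $Y_1^\ast>Y_0^\ast\Rightarrow D=1$, $Y_1^\ast<Y_0^\ast\Rightarrow D=0$. $Z$ is an observed variable affecting sector selection only, i.e. $(Y_0,Y_1)$ is independent of $Z$; there are no sector-specific covariates. The support of a random vector is the set of points all of whose neighbourhoods have positive probability. *)

theory Defs
  imports "HOL-Probability.Probability"
begin

definition rv_support :: "'a measure \<Rightarrow> ('a \<Rightarrow> 'z::topological_space) \<Rightarrow> 'z set" where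
  "rv_support M Z = {z. \<forall>U. open U \<and> z \<in> U \<longrightarrow> measure M (Z -` U \<inter> space M) > 0}"

definition cond_prob_version ::
  "'a measure \<Rightarrow> ('a \<Rightarrow> 'z::topological_space) \<Rightarrow> 'a set \<Rightarrow> ('z \<Rightarrow> real) \<Rightarrow> bool" where
  "cond_prob_version M Z A g \<longleftrightarrow>
     g \<in> borel_measurable borel \<and> integrable M (\<lambda>\<omega>. g (Z \<omega>)) \<and>
     (\<forall>B \<in> sets borel. measure M (A \<inter> Z -` B \<inter> space M) =
                        set_lebesgue_integral M (Z -` B \<inter> space M) (\<lambda>\<omega>. g (Z \<omega>)))"

text \<open>Binary Roy model (booleans encode 0/1): Y = Y1 D + Y0 (1 - D), and a.s.
  Y1 > Y0 implies D = 1, Y1 < Y0 implies D = 0.\<close>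
definition roy_model ::
  "'a measure \<Rightarrow> ('a \<Rightarrow> bool) \<Rightarrow> ('a \<Rightarrow> bool) \<Rightarrow> ('a \<Rightarrow> bool) \<Rightarrow> ('a \<Rightarrow> bool) \<Rightarrow> bool" where
  "roy_model M Y D Y0 Y1 \<longleftrightarrow>
     (\<forall>\<omega>\<in>space M. Y \<omega> = (if D \<omega> then Y1 \<omega> else Y0 \<omega>)) \<and>
     (AE \<omega> in M. ((Y1 \<omega> \<and> \<not> Y0 \<omega>) \<longrightarrow> D \<omega>) \<and> ((Y0 \<omega> \<and> \<not> Y1 \<omega>) \<longrightarrow> \<not> D \<omega>))"

definition alt_roy_model ::
  "'a measure \<Rightarrow> ('a \<Rightarrow> bool) \<Rightarrow> ('a \<Rightarrow> bool) \<Rightarrow> ('a \<Rightarrow> bool) \<Rightarrow> ('a \<Rightarrow> bool)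
   \<Rightarrow> ('a \<Rightarrow> real) \<Rightarrow> ('a \<Rightarrow> real) \<Rightarrow> bool" where
  "alt_roy_model M Y D Y0 Y1 Y0s Y1s \<longleftrightarrow>
     (\<forall>\<omega>\<in>space M. Y \<omega> = (if D \<omega> then Y1 \<omega> else Y0 \<omega>)) \<and>
     (\<forall>\<omega>\<in>space M. Y0 \<omega> = (Y0s \<omega> > 0) \<and> Y1 \<omega> = (Y1s \<omega> > 0)) \<and>
     (AE \<omega> in M. (Y1s \<omega> > Y0s \<omega> \<longrightarrow> D \<omega>) \<and> (Y1s \<omega> < Y0s \<omega> \<longrightarrow> \<not> D \<omega>))"

text \<open>Independence of two random variables with possibly different codomains
  (the library's indep_var requires a common codomain type).\<close>
definition indep_rv ::
  "'a measure \<Rightarrow> 'b measure \<Rightarrow> ('a \<Rightarrow> 'b) \<Rightarrow> 'c measure \<Rightarrow> ('a \<Rightarrow> 'c) \<Rightarrow> bool" where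
  "indep_rv M Ma X Mb W \<longleftrightarrow>
     X \<in> measurable M Ma \<and> W \<in> measurable M Mb \<and>
     (\<forall>A \<in> sets Ma. \<forall>B \<in> sets Mb.
        measure M (X -` A \<inter> W -` B \<inter> space M) =
        measure M (X -` A \<inter> space M) * measure M (W -` B \<inter> space M))"

end

theory Submission
  imports Defs
begin


lemma AE_support:
  fixes Z :: "'a \<Rightarrow> 'z::euclidean_space"
  assumes P: "prob_space M" and Zm: "Z \<in> borel_measurable M"
  shows "AE z in distr M borel Z. z \<in> rv_support M Z"
proof -
  interpret prob_space M by fact
  obtain BB :: "'z set set" where BB: "countable BB" "\<And>C. C \<in> BB \<Longrightarrow> open C"
     "\<And>S. open S \<Longrightarrow> \<exists>U. U \<subseteq> BB \<and> S = \<Union>U"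
    by (rule univ_second_countable) blast
  let ?I = "{b\<in>BB. measure M (Z -` b \<inter> space M) = 0}"
  have "(\<Union>b\<in>?I. b) \<in> null_sets (distr M borel Z)"
  proof (rule null_sets_UN')
    show "countable ?I" using BB(1) by auto
    fix b assume b: "b \<in> ?I"
    then have bo: "b \<in> sets borel" using BB(2) by auto
    have "emeasure M (Z -` b \<inter> space M) = 0"
      using b bo Zm by (simp add: emeasure_eq_measure)
    then show "b \<in> null_sets (distr M borel Z)"
      using bo Zm by (simp add: null_sets_def emeasure_distr)
  qed
  moreover have "{z \<in> space (distr M borel Z). \<not> z \<in> rv_support M Z} \<subseteq> (\<Union>b\<in>?I. b)"
  proof
    fix z assume "z \<in> {z \<in> space (distr M borel Z). \<not> z \<in> rv_support M Z}"
    then obtain U where U: "open U" "z \<in> U" "\<not> measure M (Z -` U \<inter> space M) > 0"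
      by (auto simp: rv_support_def)
    then have U0: "measure M (Z -` U \<inter> space M) = 0" using measure_nonneg[of M]
      by (meson linorder_neqE_linordered_idom not_le)
    obtain V where V: "V \<subseteq> BB" "U = \<Union>V" using BB(3)[OF U(1)] by blast
    then obtain b where b: "b \<in> V" "z \<in> b" using U(2) by auto
    have bo: "open b" using b V BB(2) by auto
    have "measure M (Z -` b \<inter> space M) \<le> measure M (Z -` U \<inter> space M)"
      apply (rule finite_measure_mono)
      using b V apply blast
      using U(1) Zm by (simp add: borel_open measurable_sets)
    then have "measure M (Z -` b \<inter> space M) = 0" using U0 measure_nonneg[of M] by (metis antisym)
    then show "z \<in> (\<Union>b\<in>?I. b)" using b V by auto
  qed
  ultimately show ?thesis by (rule AE_I')
qed

lemma ae_lower:
  fixes Z :: "'a \<Rightarrow> 'z::euclidean_space" and g :: "'z \<Rightarrow> real"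
  assumes P: "prob_space M" and Zm: "Z \<in> borel_measurable M" and gm: "g \<in> borel_measurable borel"
    and gi: "integrable M (\<lambda>\<omega>. g (Z \<omega>))"
    and le: "\<And>B. B \<in> sets borel \<Longrightarrow> c * measure M (Z -` B \<inter> space M) \<le>
                 set_lebesgue_integral M (Z -` B \<inter> space M) (\<lambda>\<omega>. g (Z \<omega>))"
  shows "AE \<omega> in M. c \<le> g (Z \<omega>)"
proof -
  interpret prob_space M by fact
  define A where "A = Z -` {z. g z < c} \<inter> space M"
  have Bs: "{z. g z < c} \<in> sets borel" using gm by measurable
  have As: "A \<in> sets M" unfolding A_def by (rule measurable_sets[OF Zm Bs])
  define h where "h \<omega> = indicator A \<omega> * (c - g (Z \<omega>))" for \<omega>
  have hi: "integrable M h" unfolding h_def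
    using integrable_real_mult_indicator[OF As, of "\<lambda>\<omega>. c - g (Z \<omega>)"] gi
    by (simp add: mult.commute)
  have hnn: "\<And>\<omega>. 0 \<le> h \<omega>" by (auto simp: h_def A_def indicator_def)
  have i1: "integrable M (\<lambda>\<omega>. indicator A \<omega> * c)"
    apply (rule integrable_const_bound[where B="\<bar>c\<bar>"])
    using As by (auto simp: indicator_def)
  have i2: "integrable M (\<lambda>\<omega>. indicator A \<omega> * g (Z \<omega>))"
    using integrable_real_mult_indicator[OF As gi] by (simp add: mult.commute)
  have "integral\<^sup>L M h = (\<integral>\<omega>. indicator A \<omega> * c \<partial>M) - (\<integral>\<omega>. indicator A \<omega> * g (Z \<omega>) \<partial>M)"
    unfolding h_def right_diff_distrib by (rule Bochner_Integration.integral_diff[OF i1 i2])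
  also have "\<dots> = c * measure M A - set_lebesgue_integral M A (\<lambda>\<omega>. g (Z \<omega>))"
    using As by (simp add: set_lebesgue_integral_def mult.commute)
  also have "\<dots> \<le> 0" using le[OF Bs] by (simp add: A_def)
  finally have "integral\<^sup>L M h = 0" using integral_nonneg_AE[of h M] hnn by (simp add: antisym)
  then have "AE \<omega> in M. h \<omega> = 0" using integral_nonneg_eq_0_iff_AE[OF hi] hnn by simp
  then show ?thesis using AE_space
    by eventually_elim (auto simp: h_def A_def indicator_def split: if_splits)
qed

lemma alt_roy:
  assumes "alt_roy_model M Y D Y0 Y1 Y0s Y1s"
  shows "roy_model M Y D Y0 Y1"
proof -
  have a: "\<forall>\<omega>\<in>space M. Y \<omega> = (if D \<omega> then Y1 \<omega> else Y0 \<omega>)"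
    "\<forall>\<omega>\<in>space M. Y0 \<omega> = (Y0s \<omega> > 0) \<and> Y1 \<omega> = (Y1s \<omega> > 0)"
    "AE \<omega> in M. (Y1s \<omega> > Y0s \<omega> \<longrightarrow> D \<omega>) \<and> (Y1s \<omega> < Y0s \<omega> \<longrightarrow> \<not> D \<omega>)"
    using assms by (auto simp: alt_roy_model_def)
  have "AE \<omega> in M. ((Y1 \<omega> \<and> \<not> Y0 \<omega>) \<longrightarrow> D \<omega>) \<and> ((Y0 \<omega> \<and> \<not> Y1 \<omega>) \<longrightarrow> \<not> D \<omega>)"
    using a(3) AE_space
  proof eventually_elim
    case (elim \<omega>)
    then show ?case using a(2) by force
  qed
  then show ?thesis using a(1) by (simp add: roy_model_def)
qed

lemma part1:
  fixes Z :: "'a \<Rightarrow> 'z::euclidean_space"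
  assumes P: "prob_space M"
    and Ym[measurable]: "Y \<in> measurable M (count_space UNIV)"
    and Dm[measurable]: "D \<in> measurable M (count_space UNIV)"
    and Zm[measurable]: "Z \<in> borel_measurable M"
    and c10: "cond_prob_version M Z {\<omega>\<in>space M. Y \<omega> \<and> \<not> D \<omega>} g10"
    and c11: "cond_prob_version M Z {\<omega>\<in>space M. Y \<omega> \<and> D \<omega>} g11"
    and Y0m[measurable]: "Y0 \<in> measurable M (count_space UNIV)"
    and Y1m[measurable]: "Y1 \<in> measurable M (count_space UNIV)"
    and ind: "indep_rv M (count_space UNIV) (\<lambda>\<omega>. (Y0 \<omega>, Y1 \<omega>)) borel Z"
    and roy: "roy_model M Y D Y0 Y1"
  shows "(AE z in distr M borel Z. z \<in> rv_support M Z \<longrightarrow>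
            0 \<le> measure M {\<omega>\<in>space M. Y0 \<omega> \<and> \<not> Y1 \<omega>} \<and>
            measure M {\<omega>\<in>space M. Y0 \<omega> \<and> \<not> Y1 \<omega>} \<le> g10 z \<and>
            0 \<le> measure M {\<omega>\<in>space M. \<not> Y0 \<omega> \<and> Y1 \<omega>} \<and>
            measure M {\<omega>\<in>space M. \<not> Y0 \<omega> \<and> Y1 \<omega>} \<le> g11 z) \<and>
        measure M {\<omega>\<in>space M. \<not> Y0 \<omega> \<and> \<not> Y1 \<omega>} = measure M {\<omega>\<in>space M. \<not> Y \<omega>}"
proof -
  interpret prob_space M by fact
  have r1: "\<forall>\<omega>\<in>space M. Y \<omega> = (if D \<omega> then Y1 \<omega> else Y0 \<omega>)"
    and r2: "AE \<omega> in M. ((Y1 \<omega> \<and> \<not> Y0 \<omega>) \<longrightarrow> D \<omega>) \<and> ((Y0 \<omega> \<and> \<not> Y1 \<omega>) \<longrightarrow> \<not> D \<omega>)"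
    using roy by (auto simp: roy_model_def)
  have indm: "\<And>A B. B \<in> sets borel \<Longrightarrow>
      measure M ((\<lambda>\<omega>. (Y0 \<omega>, Y1 \<omega>)) -` A \<inter> Z -` B \<inter> space M) =
      measure M ((\<lambda>\<omega>. (Y0 \<omega>, Y1 \<omega>)) -` A \<inter> space M) * measure M (Z -` B \<inter> space M)"
    using ind by (auto simp: indep_rv_def)
  have g10m: "g10 \<in> borel_measurable borel" "integrable M (\<lambda>\<omega>. g10 (Z \<omega>))"
    and g10e: "\<And>B. B \<in> sets borel \<Longrightarrow> measure M ({\<omega>\<in>space M. Y \<omega> \<and> \<not> D \<omega>} \<inter> Z -` B \<inter> space M) =
                        set_lebesgue_integral M (Z -` B \<inter> space M) (\<lambda>\<omega>. g10 (Z \<omega>))"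
    using c10 by (auto simp: cond_prob_version_def)
  have g11m: "g11 \<in> borel_measurable borel" "integrable M (\<lambda>\<omega>. g11 (Z \<omega>))"
    and g11e: "\<And>B. B \<in> sets borel \<Longrightarrow> measure M ({\<omega>\<in>space M. Y \<omega> \<and> D \<omega>} \<inter> Z -` B \<inter> space M) =
                        set_lebesgue_integral M (Z -` B \<inter> space M) (\<lambda>\<omega>. g11 (Z \<omega>))"
    using c11 by (auto simp: cond_prob_version_def)
  define c10 where "c10 = measure M {\<omega>\<in>space M. Y0 \<omega> \<and> \<not> Y1 \<omega>}"
  define c01 where "c01 = measure M {\<omega>\<in>space M. \<not> Y0 \<omega> \<and> Y1 \<omega>}"
  have a10: "AE \<omega> in M. c10 \<le> g10 (Z \<omega>)"
  proof (rule ae_lower[OF P Zm g10m])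
    fix B :: "'z set" assume B: "B \<in> sets borel"
    have "c10 * measure M (Z -` B \<inter> space M) =
       measure M ((\<lambda>\<omega>. (Y0 \<omega>, Y1 \<omega>)) -` {(True,False)} \<inter> Z -` B \<inter> space M)"
      using indm[OF B, of "{(True,False)}"] unfolding c10_def
      by (simp add: vimage_def Int_def conj_commute)
    also have "\<dots> \<le> measure M ({\<omega>\<in>space M. Y \<omega> \<and> \<not> D \<omega>} \<inter> Z -` B \<inter> space M)"
    proof (rule finite_measure_mono_AE)
      show "AE x in M. x \<in> (\<lambda>\<omega>. (Y0 \<omega>, Y1 \<omega>)) -` {(True, False)} \<inter> Z -` B \<inter> space M \<longrightarrow>
          x \<in> {\<omega> \<in> space M. Y \<omega> \<and> \<not> D \<omega>} \<inter> Z -` B \<inter> space M"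
        using r2 by eventually_elim (use r1 in auto)
      show "{\<omega> \<in> space M. Y \<omega> \<and> \<not> D \<omega>} \<inter> Z -` B \<inter> space M \<in> events"
        using B by measurable
    qed
    also have "\<dots> = set_lebesgue_integral M (Z -` B \<inter> space M) (\<lambda>\<omega>. g10 (Z \<omega>))"
      by (rule g10e[OF B])
    finally show "c10 * measure M (Z -` B \<inter> space M) \<le> set_lebesgue_integral M (Z -` B \<inter> space M) (\<lambda>\<omega>. g10 (Z \<omega>))" .
  qed
  have a01: "AE \<omega> in M. c01 \<le> g11 (Z \<omega>)"
  proof (rule ae_lower[OF P Zm g11m])
    fix B :: "'z set" assume B: "B \<in> sets borel"
    have "c01 * measure M (Z -` B \<inter> space M) =
       measure M ((\<lambda>\<omega>. (Y0 \<omega>, Y1 \<omega>)) -` {(False,True)} \<inter> Z -` B \<inter> space M)"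
      using indm[OF B, of "{(False,True)}"] unfolding c01_def
      by (simp add: vimage_def Int_def conj_commute)
    also have "\<dots> \<le> measure M ({\<omega>\<in>space M. Y \<omega> \<and> D \<omega>} \<inter> Z -` B \<inter> space M)"
    proof (rule finite_measure_mono_AE)
      show "AE x in M. x \<in> (\<lambda>\<omega>. (Y0 \<omega>, Y1 \<omega>)) -` {(False, True)} \<inter> Z -` B \<inter> space M \<longrightarrow>
          x \<in> {\<omega> \<in> space M. Y \<omega> \<and> D \<omega>} \<inter> Z -` B \<inter> space M"
        using r2 by eventually_elim (use r1 in auto)
      show "{\<omega> \<in> space M. Y \<omega> \<and> D \<omega>} \<inter> Z -` B \<inter> space M \<in> events"
        using B by measurable
    qed
    also have "\<dots> = set_lebesgue_integral M (Z -` B \<inter> space M) (\<lambda>\<omega>. g11 (Z \<omega>))"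
      by (rule g11e[OF B])
    finally show "c01 * measure M (Z -` B \<inter> space M) \<le> set_lebesgue_integral M (Z -` B \<inter> space M) (\<lambda>\<omega>. g11 (Z \<omega>))" .
  qed
  have d10: "AE z in distr M borel Z. c10 \<le> g10 z"
    using a10 g10m(1) by (subst AE_distr_iff) auto
  have d01: "AE z in distr M borel Z. c01 \<le> g11 z"
    using a01 g11m(1) by (subst AE_distr_iff) auto
  have "AE z in distr M borel Z. z \<in> rv_support M Z \<longrightarrow>
            0 \<le> c10 \<and> c10 \<le> g10 z \<and> 0 \<le> c01 \<and> c01 \<le> g11 z"
    using d10 d01 by eventually_elim (auto simp: c10_def c01_def)
  moreover have "measure M {\<omega>\<in>space M. \<not> Y0 \<omega> \<and> \<not> Y1 \<omega>} = measure M {\<omega>\<in>space M. \<not> Y \<omega>}"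
  proof (rule measure_eq_AE)
    show "AE x in M. (x \<in> {\<omega> \<in> space M. \<not> Y0 \<omega> \<and> \<not> Y1 \<omega>}) = (x \<in> {\<omega> \<in> space M. \<not> Y \<omega>})"
      using r2 AE_space by eventually_elim (use r1 in auto)
  qed measurable
  ultimately show ?thesis unfolding c10_def c01_def by blast
qed



lemma cpv_ext:
  fixes Z :: "'a \<Rightarrow> 'z::euclidean_space"
  assumes P: "prob_space M" and Zm[measurable]: "Z \<in> borel_measurable M"
    and cpv: "cond_prob_version M Z E g" and Es[measurable]: "E \<in> sets M"
    and hm[measurable]: "h \<in> borel_measurable borel" and hb: "\<And>z. 0 \<le> h z \<and> h z \<le> 1"
    and gnn: "AE \<omega> in M. 0 \<le> g (Z \<omega>)"
  shows "(\<integral>\<omega>. indicator E \<omega> * h (Z \<omega>) \<partial>M) = (\<integral>\<omega>. g (Z \<omega>) * h (Z \<omega>) \<partial>M)"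
proof -
  interpret prob_space M by fact
  have gm[measurable]: "g \<in> borel_measurable borel" and gi: "integrable M (\<lambda>\<omega>. g (Z \<omega>))"
    and ge: "\<And>B. B \<in> sets borel \<Longrightarrow> measure M (E \<inter> Z -` B \<inter> space M) =
                        set_lebesgue_integral M (Z -` B \<inter> space M) (\<lambda>\<omega>. g (Z \<omega>))"
    using cpv by (auto simp: cond_prob_version_def)
  define mu where "mu = distr (density M (indicator E)) borel Z"
  define nu where "nu = density (distr M borel Z) (\<lambda>z. ennreal (g z))"
  have gBi: "\<And>B. B \<in> sets borel \<Longrightarrow> integrable M (\<lambda>\<omega>. g (Z \<omega>) * indicator B (Z \<omega>))"
  proof -
    fix B :: "'z set" assume [measurable]: "B \<in> sets borel"
    show "integrable M (\<lambda>\<omega>. g (Z \<omega>) * indicator B (Z \<omega>))"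
      by (rule Bochner_Integration.integrable_bound[OF gi]) (auto simp: indicator_def)
  qed
  have "mu = nu"
  proof (rule measure_eqI)
    show "sets mu = sets nu" by (simp add: mu_def nu_def)
    fix B assume "B \<in> sets mu"
    then have B[measurable]: "B \<in> sets borel" by (simp add: mu_def)
    have "emeasure mu B = emeasure (density M (indicator E)) (Z -` B \<inter> space M)"
      unfolding mu_def by (subst emeasure_distr) auto
    also have "\<dots> = (\<integral>\<^sup>+ x. indicator E x * indicator (Z -` B \<inter> space M) x \<partial>M)"
      by (subst emeasure_density) auto
    also have "\<dots> = (\<integral>\<^sup>+ x. indicator (E \<inter> Z -` B \<inter> space M) x \<partial>M)"
      by (intro nn_integral_cong) (auto simp: indicator_def)
    also have "\<dots> = ennreal (measure M (E \<inter> Z -` B \<inter> space M))"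
      by (simp add: emeasure_eq_measure)
    also have "\<dots> = ennreal (\<integral>\<omega>. g (Z \<omega>) * indicator B (Z \<omega>) \<partial>M)"
      unfolding ge[OF B] set_lebesgue_integral_def
      by (intro arg_cong[where f=ennreal] Bochner_Integration.integral_cong) (auto simp: indicator_def)
    also have "\<dots> = (\<integral>\<^sup>+ \<omega>. ennreal (g (Z \<omega>) * indicator B (Z \<omega>)) \<partial>M)"
      using gnn by (intro nn_integral_eq_integral[symmetric] gBi B) (auto simp: indicator_def)
    also have "\<dots> = (\<integral>\<^sup>+ \<omega>. ennreal (g (Z \<omega>)) * indicator B (Z \<omega>) \<partial>M)"
      by (intro nn_integral_cong) (auto simp: indicator_def)
    also have "\<dots> = (\<integral>\<^sup>+ z. ennreal (g z) * indicator B z \<partial>distr M borel Z)"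
      by (subst nn_integral_distr) auto
    also have "\<dots> = emeasure nu B"
      unfolding nu_def by (subst emeasure_density) auto
    finally show "emeasure mu B = emeasure nu B" .
  qed
  have ghi: "integrable M (\<lambda>\<omega>. g (Z \<omega>) * h (Z \<omega>))"
  proof (rule Bochner_Integration.integrable_bound[OF gi])
    have "\<And>\<omega>. \<bar>h (Z \<omega>)\<bar> \<le> 1" using hb by (simp add: abs_le_iff)
    then show "AE x in M. norm (g (Z x) * h (Z x)) \<le> norm (g (Z x))"
      by (auto simp: abs_mult intro!: mult_left_le)
  qed simp
  have ehi: "integrable M (\<lambda>\<omega>. indicator E \<omega> * h (Z \<omega>))"
    by (rule integrable_const_bound[where B=1]) (use hb in \<open>auto simp: indicator_def abs_le_iff\<close>)
  have "ennreal (\<integral>\<omega>. indicator E \<omega> * h (Z \<omega>) \<partial>M) = (\<integral>\<^sup>+ \<omega>. ennreal (indicator E \<omega> * h (Z \<omega>)) \<partial>M)"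
    by (intro nn_integral_eq_integral[symmetric] ehi) (auto simp: hb)
  also have "\<dots> = (\<integral>\<^sup>+ \<omega>. indicator E \<omega> * ennreal (h (Z \<omega>)) \<partial>M)"
    by (intro nn_integral_cong) (auto simp: indicator_def)
  also have "\<dots> = (\<integral>\<^sup>+ \<omega>. ennreal (h (Z \<omega>)) \<partial>density M (indicator E))"
    by (subst nn_integral_density) auto
  also have "\<dots> = (\<integral>\<^sup>+ z. ennreal (h z) \<partial>mu)"
    unfolding mu_def by (subst nn_integral_distr) auto
  also have "\<dots> = (\<integral>\<^sup>+ z. ennreal (h z) \<partial>nu)" using \<open>mu = nu\<close> by simp
  also have "\<dots> = (\<integral>\<^sup>+ z. ennreal (g z) * ennreal (h z) \<partial>distr M borel Z)"
    unfolding nu_def by (subst nn_integral_density) auto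
  also have "\<dots> = (\<integral>\<^sup>+ \<omega>. ennreal (g (Z \<omega>)) * ennreal (h (Z \<omega>)) \<partial>M)"
    by (subst nn_integral_distr) auto
  also have "\<dots> = (\<integral>\<^sup>+ \<omega>. ennreal (g (Z \<omega>) * h (Z \<omega>)) \<partial>M)"
    using gnn by (intro nn_integral_cong_AE) (auto simp: ennreal_mult hb)
  also have "\<dots> = ennreal (\<integral>\<omega>. g (Z \<omega>) * h (Z \<omega>) \<partial>M)"
    using gnn by (intro nn_integral_eq_integral ghi) (auto simp: hb)
  finally have "ennreal (\<integral>\<omega>. indicator E \<omega> * h (Z \<omega>) \<partial>M) = ennreal (\<integral>\<omega>. g (Z \<omega>) * h (Z \<omega>) \<partial>M)" .
  moreover have "0 \<le> (\<integral>\<omega>. indicator E \<omega> * h (Z \<omega>) \<partial>M)"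
    by (intro integral_nonneg_AE) (auto simp: hb)
  moreover have "0 \<le> (\<integral>\<omega>. g (Z \<omega>) * h (Z \<omega>) \<partial>M)"
    using gnn by (intro integral_nonneg_AE) (auto simp: hb)
  ultimately show ?thesis by simp
qed



lemma UNIV_bb: "(UNIV::(bool\<times>bool) set) = {(False,False),(False,True),(True,False),(True,True)}"
  by auto

lemma sum_bb: "(\<Sum>ab\<in>(UNIV::(bool\<times>bool) set). f ab) = f (False,False) + f (False,True) + f (True,False) + f (True,True)"
  by (simp add: UNIV_bb add.assoc)

definition wf :: "('a\<Rightarrow>bool) \<Rightarrow> ('a\<Rightarrow>bool) \<Rightarrow> ('a \<Rightarrow> real) \<Rightarrow> ('a \<Rightarrow> real) \<Rightarrow> 'a \<Rightarrow> bool \<times> bool \<Rightarrow> real" where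
  "wf Y D a b \<omega> ab = (if D \<omega> then (if snd ab then 0 else if Y \<omega> then (if fst ab then 1 - b \<omega> else b \<omega>)
      else (if fst ab then 0 else 1))
    else (if fst ab then 0 else if Y \<omega> then (if snd ab then 1 - a \<omega> else a \<omega>) else (if snd ab then 0 else 1)))"

lemma wf_bounds:
  assumes "0 \<le> a \<omega>" "a \<omega> \<le> 1" "0 \<le> b \<omega>" "b \<omega> \<le> 1"
  shows "0 \<le> wf Y D a b \<omega> ab" "wf Y D a b \<omega> ab \<le> 1"
  using assms by (auto simp: wf_def)

lemma wf_sum: "(\<Sum>ab\<in>UNIV. wf Y D a b \<omega> ab) = 1"
  by (simp add: sum_bb wf_def)

lemma wf_meas:
  assumes [measurable]: "Y \<in> measurable M (count_space UNIV)" "D \<in> measurable M (count_space UNIV)"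
    "a \<in> borel_measurable M" "b \<in> borel_measurable M"
  shows "(\<lambda>\<omega>. wf Y D a b \<omega> ab) \<in> borel_measurable M"
  unfolding wf_def by measurable

lemma wf_meas2:
  assumes [measurable]: "Y \<in> measurable M (count_space UNIV)" "D \<in> measurable M (count_space UNIV)"
    "a \<in> borel_measurable M" "b \<in> borel_measurable M"
  shows "(\<lambda>x. ennreal (wf Y D a b (fst x) (snd x))) \<in> borel_measurable (M \<Otimes>\<^sub>M count_space UNIV)"
proof (rule measurable_compose_countable'[where g=snd and I=UNIV and f="\<lambda>i x. ennreal (wf Y D a b (fst x) i)"])
  fix i :: "bool \<times> bool"
  have "(\<lambda>\<omega>. wf Y D a b \<omega> i) \<in> borel_measurable M" by (rule wf_meas[OF assms])
  then show "(\<lambda>x. ennreal (wf Y D a b (fst x) i)) \<in> borel_measurable (M \<Otimes>\<^sub>M count_space UNIV)"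
    by measurable
qed auto

lemma constr_basic:
  assumes P: "prob_space M" and [measurable]: "Y \<in> measurable M (count_space UNIV)" "D \<in> measurable M (count_space UNIV)"
    "a \<in> borel_measurable M" "b \<in> borel_measurable M"
    and ab: "\<And>\<omega>. 0 \<le> a \<omega> \<and> a \<omega> \<le> 1" "\<And>\<omega>. 0 \<le> b \<omega> \<and> b \<omega> \<le> 1"
    and N: "N = density (M \<Otimes>\<^sub>M count_space UNIV) (\<lambda>x. ennreal (wf Y D a b (fst x) (snd x)))"
  shows "\<And>S. S \<in> sets (M \<Otimes>\<^sub>M count_space UNIV) \<Longrightarrow>
      emeasure N S = (\<integral>\<^sup>+ \<omega>. ennreal (\<Sum>ab\<in>UNIV. wf Y D a b \<omega> ab * indicator S (\<omega>, ab)) \<partial>M)"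
    and "prob_space N"
    and "\<And>S. S \<in> sets (M \<Otimes>\<^sub>M count_space UNIV) \<Longrightarrow>
      measure N S = (\<integral>\<omega>. (\<Sum>ab\<in>UNIV. wf Y D a b \<omega> ab * indicator S (\<omega>, ab)) \<partial>M)"
    and "space N = space M \<times> UNIV" "sets N = sets (M \<Otimes>\<^sub>M count_space UNIV)"
proof -
  interpret prob_space M by fact
  interpret C: sigma_finite_measure "count_space (UNIV :: (bool\<times>bool) set)"
    by (rule sigma_finite_measure_count_space_finite) simp
  note wm[measurable] = wf_meas2[of Y M D a b] wf_meas[of Y M D a b]
  have wb: "\<And>\<omega> ab. 0 \<le> wf Y D a b \<omega> ab" "\<And>\<omega> ab. wf Y D a b \<omega> ab \<le> 1"
    using wf_bounds ab by meson+
  show E: "emeasure N S = (\<integral>\<^sup>+ \<omega>. ennreal (\<Sum>ab\<in>UNIV. wf Y D a b \<omega> ab * indicator S (\<omega>, ab)) \<partial>M)"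
    if S[measurable]: "S \<in> sets (M \<Otimes>\<^sub>M count_space UNIV)" for S
  proof -
    have "emeasure N S = (\<integral>\<^sup>+ x. ennreal (wf Y D a b (fst x) (snd x)) * indicator S x \<partial>(M \<Otimes>\<^sub>M count_space UNIV))"
      unfolding N by (rule emeasure_density) measurable
    also have "\<dots> = (\<integral>\<^sup>+ \<omega>. \<integral>\<^sup>+ ab. ennreal (wf Y D a b \<omega> ab) * indicator S (\<omega>, ab) \<partial>count_space UNIV \<partial>M)"
      by (subst C.nn_integral_fst[symmetric]) auto
    also have "\<dots> = (\<integral>\<^sup>+ \<omega>. ennreal (\<Sum>ab\<in>UNIV. wf Y D a b \<omega> ab * indicator S (\<omega>, ab)) \<partial>M)"
      apply (intro nn_integral_cong)
      apply (subst nn_integral_count_space_finite, simp)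
      apply (subst sum_ennreal[symmetric])
       apply (simp add: wb)
      apply (intro sum.cong refl)
      apply (simp add: indicator_def wb)
      done
    finally show ?thesis .
  qed
  show sp: "space N = space M \<times> UNIV" unfolding N by (simp add: space_pair_measure)
  show sN: "sets N = sets (M \<Otimes>\<^sub>M count_space UNIV)" unfolding N by simp
  have "emeasure N (space N) = 1"
  proof -
    have "space N \<in> sets (M \<Otimes>\<^sub>M count_space UNIV)" using sN by auto
    then have "emeasure N (space N) = (\<integral>\<^sup>+ \<omega>. ennreal (\<Sum>ab\<in>UNIV. wf Y D a b \<omega> ab * indicator (space N) (\<omega>, ab)) \<partial>M)"
      by (rule E)
    also have "\<dots> = (\<integral>\<^sup>+ \<omega>. 1 \<partial>M)"
      by (intro nn_integral_cong) (simp add: sp wf_sum)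
    finally show ?thesis by (simp add: emeasure_space_1)
  qed
  then show PN: "prob_space N" by (rule prob_spaceI)
  show "measure N S = (\<integral>\<omega>. (\<Sum>ab\<in>UNIV. wf Y D a b \<omega> ab * indicator S (\<omega>, ab)) \<partial>M)"
    if S[measurable]: "S \<in> sets (M \<Otimes>\<^sub>M count_space UNIV)" for S
  proof -
    have bnd: "\<And>\<omega>. 0 \<le> (\<Sum>ab\<in>UNIV. wf Y D a b \<omega> ab * indicator S (\<omega>, ab))"
      "\<And>\<omega>. (\<Sum>ab\<in>UNIV. wf Y D a b \<omega> ab * indicator S (\<omega>, ab)) \<le> 1"
    proof -
      fix \<omega>
      show "0 \<le> (\<Sum>ab\<in>UNIV. wf Y D a b \<omega> ab * indicator S (\<omega>, ab))"
        by (intro sum_nonneg) (simp add: wb)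
      have "(\<Sum>ab\<in>UNIV. wf Y D a b \<omega> ab * indicator S (\<omega>, ab)) \<le> (\<Sum>ab\<in>UNIV. wf Y D a b \<omega> ab)"
        by (intro sum_mono) (simp add: wb indicator_def)
      then show "(\<Sum>ab\<in>UNIV. wf Y D a b \<omega> ab * indicator S (\<omega>, ab)) \<le> 1" by (simp add: wf_sum)
    qed
    have mS: "(\<lambda>\<omega>. (\<Sum>ab\<in>UNIV. wf Y D a b \<omega> ab * indicator S (\<omega>, ab))) \<in> borel_measurable M"
      by measurable
    have int: "integrable M (\<lambda>\<omega>. (\<Sum>ab\<in>UNIV. wf Y D a b \<omega> ab * indicator S (\<omega>, ab)))"
      by (rule integrable_const_bound[where B=1]) (use bnd mS in auto)
    have "measure N S = enn2real (emeasure N S)" by (simp add: measure_def)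
    also have "\<dots> = enn2real (ennreal (\<integral>\<omega>. (\<Sum>ab\<in>UNIV. wf Y D a b \<omega> ab * indicator S (\<omega>, ab)) \<partial>M))"
      unfolding E[OF S] using bnd by (subst nn_integral_eq_integral[OF int]) auto
    also have "\<dots> = (\<integral>\<omega>. (\<Sum>ab\<in>UNIV. wf Y D a b \<omega> ab * indicator S (\<omega>, ab)) \<partial>M)"
      using bnd by (simp add: integral_nonneg_AE)
    finally show ?thesis .
  qed
qed



lemma integral_ind_comp:
  assumes "prob_space M" and X[measurable]: "X \<in> measurable M N" and A[measurable]: "A \<in> sets N"
  shows "(\<integral>\<omega>. indicator A (X \<omega>) \<partial>M) = measure M (X -` A \<inter> space M)"
proof -
  interpret prob_space M by fact
  have "(\<integral>\<omega>. indicator A (X \<omega>) \<partial>M) = (\<integral>\<omega>. indicator (X -` A \<inter> space M) \<omega> \<partial>M)"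
    by (intro Bochner_Integration.integral_cong) (auto simp: indicator_def)
  also have "\<dots> = measure M (X -` A \<inter> space M)"
    by (simp add: Int_assoc)
  finally show ?thesis .
qed

lemma meas_pairbool:
  assumes [measurable]: "(Y0::_\<Rightarrow>bool) \<in> measurable N (count_space UNIV)" "(Y1::_\<Rightarrow>bool) \<in> measurable N (count_space UNIV)"
  shows "(\<lambda>x. (Y0 x, Y1 x)) \<in> measurable N (count_space UNIV)"
proof (rule measurable_count_space_eq2_countable[THEN iffD2], intro conjI ballI)
  fix c :: "bool \<times> bool"
  have "(\<lambda>x. (Y0 x, Y1 x)) -` {c} \<inter> space N = {x\<in>space N. (Y0 x = fst c) \<and> (Y1 x = snd c)}"
    by (cases c) auto
  also have "\<dots> \<in> sets N" by measurable
  finally show "(\<lambda>x. (Y0 x, Y1 x)) -` {c} \<inter> space N \<in> sets N" .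
qed auto

lemma qhelp:
  fixes g p :: real
  assumes "0 \<le> p" "p \<le> g"
  shows "g * max 0 (min 1 (p / g)) = p"
proof (cases "p = 0")
  case True then show ?thesis by simp
next
  case False
  then have "0 < g" using assms by simp
  moreover have "p / g \<le> 1" using assms \<open>0 < g\<close> by simp
  moreover have "0 \<le> p / g" using assms \<open>0 < g\<close> by simp
  ultimately show ?thesis by simp
qed

lemma part2:
  fixes Z :: "'a \<Rightarrow> 'z::euclidean_space"
  assumes P: "prob_space M"
    and Ym[measurable]: "Y \<in> measurable M (count_space UNIV)"
    and Dm[measurable]: "D \<in> measurable M (count_space UNIV)"
    and Zm[measurable]: "Z \<in> borel_measurable M"
    and c10: "cond_prob_version M Z {\<omega>\<in>space M. Y \<omega> \<and> \<not> D \<omega>} g10"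
    and c11: "cond_prob_version M Z {\<omega>\<in>space M. Y \<omega> \<and> D \<omega>} g11"
    and indY: "indep_rv M (count_space UNIV) Y borel Z"
    and hAE: "AE z in distr M borel Z. z \<in> rv_support M Z \<longrightarrow>
            0 \<le> p10 \<and> p10 \<le> g10 z \<and> 0 \<le> p01 \<and> p01 \<le> g11 z"
    and p00: "p00 = measure M {\<omega>\<in>space M. \<not> Y \<omega>}"
  shows "\<exists>(N :: ('a \<times> bool \<times> bool) measure) Yt Dt Zt Y0 Y1.
            prob_space N \<and>
            Yt \<in> measurable N (count_space UNIV) \<and> Dt \<in> measurable N (count_space UNIV) \<and>
            Zt \<in> borel_measurable N \<and>
            Y0 \<in> measurable N (count_space UNIV) \<and> Y1 \<in> measurable N (count_space UNIV) \<and>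
            distr N (count_space UNIV \<Otimes>\<^sub>M count_space UNIV \<Otimes>\<^sub>M borel) (\<lambda>\<omega>. (Yt \<omega>, Dt \<omega>, Zt \<omega>)) =
              distr M (count_space UNIV \<Otimes>\<^sub>M count_space UNIV \<Otimes>\<^sub>M borel) (\<lambda>\<omega>. (Y \<omega>, D \<omega>, Z \<omega>)) \<and>
            indep_rv N (count_space UNIV) (\<lambda>\<omega>. (Y0 \<omega>, Y1 \<omega>)) borel Zt \<and>
            roy_model N Yt Dt Y0 Y1 \<and>
            measure N {\<omega>\<in>space N. \<not> Y0 \<omega> \<and> \<not> Y1 \<omega>} = p00 \<and>
            measure N {\<omega>\<in>space N. \<not> Y0 \<omega> \<and> Y1 \<omega>} = p01 \<and>
            measure N {\<omega>\<in>space N. Y0 \<omega> \<and> \<not> Y1 \<omega>} = p10"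
proof -
  interpret prob_space M by fact
  have g10m[measurable]: "g10 \<in> borel_measurable borel" and g11m[measurable]: "g11 \<in> borel_measurable borel"
    using c10 c11 by (auto simp: cond_prob_version_def)
  define E0 where "E0 = {\<omega>\<in>space M. \<not> Y \<omega>}"
  define E10 where "E10 = {\<omega>\<in>space M. Y \<omega> \<and> \<not> D \<omega>}"
  define E11 where "E11 = {\<omega>\<in>space M. Y \<omega> \<and> D \<omega>}"
  have Es[measurable]: "E0 \<in> sets M" "E10 \<in> sets M" "E11 \<in> sets M"
    unfolding E0_def E10_def E11_def by measurable
  have hz: "AE z in distr M borel Z. 0 \<le> p10 \<and> p10 \<le> g10 z \<and> 0 \<le> p01 \<and> p01 \<le> g11 z"
    using hAE AE_support[OF P Zm] by eventually_elim auto
  have hM: "AE \<omega> in M. 0 \<le> p10 \<and> p10 \<le> g10 (Z \<omega>) \<and> 0 \<le> p01 \<and> p01 \<le> g11 (Z \<omega>)"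
    using hz by (subst (asm) AE_distr_iff) auto
  have "AE \<omega> in M. 0 \<le> p10 \<and> 0 \<le> p01" using hM by eventually_elim auto
  then have pnn: "0 \<le> p10" "0 \<le> p01" by simp_all
  define q10 where "q10 z = max 0 (min 1 (p10 / g10 z))" for z
  define q11 where "q11 z = max 0 (min 1 (p01 / g11 z))" for z
  have qm[measurable]: "q10 \<in> borel_measurable borel" "q11 \<in> borel_measurable borel"
    unfolding q10_def q11_def by measurable
  have qb: "\<And>z. 0 \<le> q10 z \<and> q10 z \<le> 1" "\<And>z. 0 \<le> q11 z \<and> q11 z \<le> 1"
    by (auto simp: q10_def q11_def)
  have qg10: "AE \<omega> in M. g10 (Z \<omega>) * q10 (Z \<omega>) = p10"
    using hM by eventually_elim (unfold q10_def, rule qhelp, auto)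
  have qg11: "AE \<omega> in M. g11 (Z \<omega>) * q11 (Z \<omega>) = p01"
    using hM by eventually_elim (unfold q11_def, rule qhelp, auto)
  have g10nn: "AE \<omega> in M. 0 \<le> g10 (Z \<omega>)" using hM by eventually_elim auto
  have g11nn: "AE \<omega> in M. 0 \<le> g11 (Z \<omega>)" using hM by eventually_elim auto
  have ZB: "\<And>B. B \<in> sets borel \<Longrightarrow> (\<integral>\<omega>. indicator B (Z \<omega>) \<partial>M) = measure M (Z -` B \<inter> space M)"
    by (rule integral_ind_comp[OF P Zm])
  have I10: "(\<integral>\<omega>. indicator B (Z \<omega>) * (indicator E10 \<omega> * q10 (Z \<omega>)) \<partial>M) = p10 * measure M (Z -` B \<inter> space M)"
    if B[measurable]: "B \<in> sets borel" for B
  proof -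
    have "(\<integral>\<omega>. indicator B (Z \<omega>) * (indicator E10 \<omega> * q10 (Z \<omega>)) \<partial>M)
        = (\<integral>\<omega>. indicator E10 \<omega> * (\<lambda>z. indicator B z * q10 z) (Z \<omega>) \<partial>M)"
      by (simp add: ac_simps)
    also have "\<dots> = (\<integral>\<omega>. g10 (Z \<omega>) * (\<lambda>z. indicator B z * q10 z) (Z \<omega>) \<partial>M)"
      by (rule cpv_ext[OF P Zm c10[folded E10_def] Es(2)]) (use qb g10nn in \<open>auto simp: indicator_def\<close>)
    also have "\<dots> = (\<integral>\<omega>. p10 * indicator B (Z \<omega>) \<partial>M)"
      apply (rule integral_cong_AE)
        apply measurable
      using qg10 by eventually_elim simp
    also have "\<dots> = p10 * measure M (Z -` B \<inter> space M)" by (simp add: ZB[OF B])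
    finally show ?thesis .
  qed
  have I11: "(\<integral>\<omega>. indicator B (Z \<omega>) * (indicator E11 \<omega> * q11 (Z \<omega>)) \<partial>M) = p01 * measure M (Z -` B \<inter> space M)"
    if B[measurable]: "B \<in> sets borel" for B
  proof -
    have "(\<integral>\<omega>. indicator B (Z \<omega>) * (indicator E11 \<omega> * q11 (Z \<omega>)) \<partial>M)
        = (\<integral>\<omega>. indicator E11 \<omega> * (\<lambda>z. indicator B z * q11 z) (Z \<omega>) \<partial>M)"
      by (simp add: ac_simps)
    also have "\<dots> = (\<integral>\<omega>. g11 (Z \<omega>) * (\<lambda>z. indicator B z * q11 z) (Z \<omega>) \<partial>M)"
      by (rule cpv_ext[OF P Zm c11[folded E11_def] Es(3)]) (use qb g11nn in \<open>auto simp: indicator_def\<close>)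
    also have "\<dots> = (\<integral>\<omega>. p01 * indicator B (Z \<omega>) \<partial>M)"
      apply (rule integral_cong_AE)
        apply measurable
      using qg11 by eventually_elim simp
    also have "\<dots> = p01 * measure M (Z -` B \<inter> space M)" by (simp add: ZB[OF B])
    finally show ?thesis .
  qed
  have I0: "(\<integral>\<omega>. indicator B (Z \<omega>) * indicator E0 \<omega> \<partial>M) = p00 * measure M (Z -` B \<inter> space M)"
    if B[measurable]: "B \<in> sets borel" for B
  proof -
    have "(\<integral>\<omega>. indicator B (Z \<omega>) * indicator E0 \<omega> \<partial>M) = ((\<integral>\<omega>. indicator (Y -` {False} \<inter> Z -` B \<inter> space M) \<omega> \<partial>M) :: real)"
      by (intro Bochner_Integration.integral_cong) (auto simp: indicator_def E0_def)
    also have "\<dots> = measure M (Y -` {False} \<inter> Z -` B \<inter> space M)"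
      by (simp add: Int_absorb2 Int_lower2 Int_assoc)
    also have "\<dots> = measure M (Y -` {False} \<inter> space M) * measure M (Z -` B \<inter> space M)"
      using indY B by (auto simp: indep_rv_def)
    also have "measure M (Y -` {False} \<inter> space M) = p00"
      unfolding p00 by (intro arg_cong[where f="measure M"]) auto
    finally show ?thesis .
  qed
  define a where "a \<omega> = q10 (Z \<omega>)" for \<omega>
  define b where "b \<omega> = q11 (Z \<omega>)" for \<omega>
  have abm[measurable]: "a \<in> borel_measurable M" "b \<in> borel_measurable M"
    unfolding a_def b_def by measurable
  define C where "C = (count_space UNIV :: (bool \<times> bool) measure)"
  define N where "N = density (M \<Otimes>\<^sub>M C) (\<lambda>x. ennreal (wf Y D a b (fst x) (snd x)))"
  note cb = constr_basic[OF P Ym Dm abm, of N, folded C_def]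
  have NE: "\<And>S. S \<in> sets (M \<Otimes>\<^sub>M C) \<Longrightarrow>
      measure N S = (\<integral>\<omega>. (\<Sum>ab\<in>UNIV. wf Y D a b \<omega> ab * indicator S (\<omega>, ab)) \<partial>M)"
    and NP: "prob_space N" and spN: "space N = space M \<times> UNIV" and sN: "sets N = sets (M \<Otimes>\<^sub>M C)"
    using cb qb unfolding N_def a_def b_def by auto
  define Yt where "Yt x = Y (fst x)" for x :: "'a \<times> bool \<times> bool"
  define Dt where "Dt x = D (fst x)" for x :: "'a \<times> bool \<times> bool"
  define Zt where "Zt x = Z (fst x)" for x :: "'a \<times> bool \<times> bool"
  define Y0 where "Y0 x = (if D (fst x) then fst (snd x) else Y (fst x))" for x :: "'a \<times> bool \<times> bool"
  define Y1 where "Y1 x = (if D (fst x) then Y (fst x) else snd (snd x))" for x :: "'a \<times> bool \<times> bool"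
  have m1: "(\<lambda>x::'a \<times> bool \<times> bool. fst (snd x)) \<in> measurable (M \<Otimes>\<^sub>M C) (count_space UNIV)"
    unfolding C_def by (rule measurable_compose[OF measurable_snd]) simp
  have m1': "(\<lambda>x::'a \<times> bool \<times> bool. snd (snd x)) \<in> measurable (M \<Otimes>\<^sub>M C) (count_space UNIV)"
    unfolding C_def by (rule measurable_compose[OF measurable_snd]) simp
  have mYt: "Yt \<in> measurable (M \<Otimes>\<^sub>M C) (count_space UNIV)"
    unfolding Yt_def by (rule measurable_compose[OF measurable_fst Ym])
  have mDt: "Dt \<in> measurable (M \<Otimes>\<^sub>M C) (count_space UNIV)"
    unfolding Dt_def by (rule measurable_compose[OF measurable_fst Dm])
  have mZt: "Zt \<in> borel_measurable (M \<Otimes>\<^sub>M C)"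
    unfolding Zt_def by (rule measurable_compose[OF measurable_fst Zm])
  have mY0: "Y0 \<in> measurable (M \<Otimes>\<^sub>M C) (count_space UNIV)"
    unfolding Y0_def
    apply (rule measurable_If[OF m1 mYt[unfolded Yt_def]])
    using mDt[unfolded Dt_def] by measurable
  have mY1: "Y1 \<in> measurable (M \<Otimes>\<^sub>M C) (count_space UNIV)"
    unfolding Y1_def
    apply (rule measurable_If[OF mYt[unfolded Yt_def] m1'])
    using mDt[unfolded Dt_def] by measurable
  have mY01: "(\<lambda>x. (Y0 x, Y1 x)) \<in> measurable (M \<Otimes>\<^sub>M C) (count_space UNIV)"
    by (rule meas_pairbool[OF mY0 mY1])
  have mNeq: "\<And>L. measurable N L = measurable (M \<Otimes>\<^sub>M C) L"
    using sN by (intro measurable_cong_sets) auto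
  have spNC: "space N = space (M \<Otimes>\<^sub>M C)" using sN by (rule sets_eq_imp_space_eq)
  define kap where "kap A = indicator A (False,False) * p00 + indicator A (True,False) * p10
     + indicator A (False,True) * p01 + indicator A (True,True) * (1 - p00 - p10 - p01)" for A :: "(bool \<times> bool) set"
  define zb where "zb B \<omega> = (indicator B (Z \<omega>) :: real)" for B \<omega>
  define f0 where "f0 B \<omega> = zb B \<omega> * indicator E0 \<omega>" for B \<omega>
  define f10 where "f10 B \<omega> = zb B \<omega> * (indicator E10 \<omega> * q10 (Z \<omega>))" for B \<omega>
  define f11 where "f11 B \<omega> = zb B \<omega> * (indicator E11 \<omega> * q11 (Z \<omega>))" for B \<omega>
  have ptw: "(\<Sum>ab\<in>UNIV. wf Y D a b \<omega> ab * indicator ((\<lambda>x. (Y0 x, Y1 x)) -` A \<inter> Zt -` B \<inter> space N) (\<omega>, ab))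
     = indicator A (False,False) * f0 B \<omega> + indicator A (True,False) * f10 B \<omega> + indicator A (False,True) * f11 B \<omega>
       + indicator A (True,True) * (zb B \<omega> - f0 B \<omega> - f10 B \<omega> - f11 B \<omega>)"
    if "\<omega> \<in> space M" for A B \<omega>
    using that unfolding sum_bb
    by (cases "D \<omega>"; cases "Y \<omega>"; cases "Z \<omega> \<in> B")
      (simp_all add: wf_def a_def b_def f0_def f10_def f11_def zb_def E0_def E10_def E11_def Y0_def Y1_def Zt_def spN indicator_def)
  have intg: "integrable M (zb B)" "integrable M (f0 B)" "integrable M (f10 B)" "integrable M (f11 B)"
    if B[measurable]: "B \<in> sets borel" for B
  proof -
    show "integrable M (zb B)" unfolding zb_def
      by (rule integrable_const_bound[where B=1]) (auto simp: indicator_def)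
    show "integrable M (f0 B)" unfolding zb_def f0_def
      by (rule integrable_const_bound[where B=1]) (auto simp: indicator_def)
    show "integrable M (f10 B)" unfolding zb_def f10_def
      by (rule integrable_const_bound[where B=1]) (use qb in \<open>auto simp: indicator_def\<close>)
    show "integrable M (f11 B)" unfolding zb_def f11_def
      by (rule integrable_const_bound[where B=1]) (use qb in \<open>auto simp: indicator_def\<close>)
  qed
  have ints: "integral\<^sup>L M (zb B) = measure M (Z -` B \<inter> space M)"
     "integral\<^sup>L M (f0 B) = p00 * measure M (Z -` B \<inter> space M)"
     "integral\<^sup>L M (f10 B) = p10 * measure M (Z -` B \<inter> space M)"
     "integral\<^sup>L M (f11 B) = p01 * measure M (Z -` B \<inter> space M)"
    if B[measurable]: "B \<in> sets borel" for B
    using ZB[OF B] I0[OF B] I10[OF B] I11[OF B] unfolding zb_def f0_def f10_def f11_def by simp_all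
  have indF: "measure N ((\<lambda>x. (Y0 x, Y1 x)) -` A \<inter> Zt -` B \<inter> space N) = measure M (Z -` B \<inter> space M) * kap A"
    if B[measurable]: "B \<in> sets borel" for A B
  proof -
    have "(\<lambda>x. (Y0 x, Y1 x)) -` A \<inter> Zt -` B \<inter> space N =
       ((\<lambda>x. (Y0 x, Y1 x)) -` A \<inter> space (M \<Otimes>\<^sub>M C)) \<inter> (Zt -` B \<inter> space (M \<Otimes>\<^sub>M C))"
      using spNC by auto
    also have "\<dots> \<in> sets (M \<Otimes>\<^sub>M C)"
      by (intro sets.Int measurable_sets[OF mY01] measurable_sets[OF mZt B]) simp
    finally have Ss: "(\<lambda>x. (Y0 x, Y1 x)) -` A \<inter> Zt -` B \<inter> space N \<in> sets (M \<Otimes>\<^sub>M C)" .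
    have "measure N ((\<lambda>x. (Y0 x, Y1 x)) -` A \<inter> Zt -` B \<inter> space N) =
      (\<integral>\<omega>. indicator A (False,False) * f0 B \<omega> + indicator A (True,False) * f10 B \<omega> + indicator A (False,True) * f11 B \<omega>
       + indicator A (True,True) * (zb B \<omega> - f0 B \<omega> - f10 B \<omega> - f11 B \<omega>) \<partial>M)"
      unfolding NE[OF Ss] by (intro Bochner_Integration.integral_cong refl ptw)
    also have "\<dots> = measure M (Z -` B \<inter> space M) * kap A"
      using intg[OF B] ints[OF B] by (simp add: kap_def algebra_simps)
    finally show ?thesis .
  qed
  have kapU: "kap UNIV = 1" by (simp add: kap_def)
  have mU: "measure M (Z -` UNIV \<inter> space M) = 1" by (simp add: prob_space)
  have indN: "indep_rv N (count_space UNIV) (\<lambda>x. (Y0 x, Y1 x)) borel Zt"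
    unfolding indep_rv_def mNeq
  proof (intro conjI ballI mY01 mZt)
    fix A :: "(bool \<times> bool) set" and B :: "'z set" assume B: "B \<in> sets borel"
    have e1: "(\<lambda>x. (Y0 x, Y1 x)) -` A \<inter> space N = (\<lambda>x. (Y0 x, Y1 x)) -` A \<inter> Zt -` UNIV \<inter> space N" by auto
    have e2: "Zt -` B \<inter> space N = (\<lambda>x. (Y0 x, Y1 x)) -` UNIV \<inter> Zt -` B \<inter> space N" by auto
    show "measure N ((\<lambda>x. (Y0 x, Y1 x)) -` A \<inter> Zt -` B \<inter> space N) =
        measure N ((\<lambda>x. (Y0 x, Y1 x)) -` A \<inter> space N) * measure N (Zt -` B \<inter> space N)"
      unfolding e1 e2 indF[OF B] indF[OF sets.top[of borel, unfolded space_borel]] kapU mU by simp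
  qed
  have pN: "measure N {x\<in>space N. \<not> Y0 x \<and> \<not> Y1 x} = p00"
    "measure N {x\<in>space N. \<not> Y0 x \<and> Y1 x} = p01"
    "measure N {x\<in>space N. Y0 x \<and> \<not> Y1 x} = p10"
  proof -
    have e: "{x\<in>space N. \<not> Y0 x \<and> \<not> Y1 x} = (\<lambda>x. (Y0 x, Y1 x)) -` {(False,False)} \<inter> Zt -` UNIV \<inter> space N"
      "{x\<in>space N. \<not> Y0 x \<and> Y1 x} = (\<lambda>x. (Y0 x, Y1 x)) -` {(False,True)} \<inter> Zt -` UNIV \<inter> space N"
      "{x\<in>space N. Y0 x \<and> \<not> Y1 x} = (\<lambda>x. (Y0 x, Y1 x)) -` {(True,False)} \<inter> Zt -` UNIV \<inter> space N"
      by auto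
    show "measure N {x\<in>space N. \<not> Y0 x \<and> \<not> Y1 x} = p00"
      "measure N {x\<in>space N. \<not> Y0 x \<and> Y1 x} = p01"
      "measure N {x\<in>space N. Y0 x \<and> \<not> Y1 x} = p10"
      unfolding e indF[OF sets.top[of borel, unfolded space_borel]] mU by (simp_all add: kap_def)
  qed
  have royN: "roy_model N Yt Dt Y0 Y1"
    unfolding roy_model_def
  proof (intro conjI ballI)
    fix x assume "x \<in> space N"
    show "Yt x = (if Dt x then Y1 x else Y0 x)" by (simp add: Yt_def Dt_def Y0_def Y1_def)
  next
    have wm: "(\<lambda>x. ennreal (wf Y D a b (fst x) (snd x))) \<in> borel_measurable (M \<Otimes>\<^sub>M C)"
      unfolding C_def by (rule wf_meas2[OF Ym Dm abm])
    show "AE x in N. (Y1 x \<and> \<not> Y0 x \<longrightarrow> Dt x) \<and> (Y0 x \<and> \<not> Y1 x \<longrightarrow> \<not> Dt x)"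
      unfolding N_def AE_density[OF wm]
    proof (rule AE_I2, intro impI)
      fix x :: "'a \<times> bool \<times> bool" assume "0 < ennreal (wf Y D a b (fst x) (snd x))"
      then have "0 < wf Y D a b (fst x) (snd x)" by simp
      then show "(Y1 x \<and> \<not> Y0 x \<longrightarrow> Dt x) \<and> (Y0 x \<and> \<not> Y1 x \<longrightarrow> \<not> Dt x)"
        by (cases x) (auto simp: wf_def Y0_def Y1_def Dt_def split: if_splits)
    qed
  qed
  let ?T = "count_space UNIV \<Otimes>\<^sub>M count_space UNIV \<Otimes>\<^sub>M (borel :: 'z measure)"
  have fN: "(\<lambda>x. (Yt x, Dt x, Zt x)) \<in> measurable N ?T"
    unfolding mNeq using mYt mDt mZt by measurable
  have fM: "(\<lambda>\<omega>. (Y \<omega>, D \<omega>, Z \<omega>)) \<in> measurable M ?T" by measurable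
  interpret PN: prob_space N by (rule NP)
  have distrEq: "distr N ?T (\<lambda>x. (Yt x, Dt x, Zt x)) = distr M ?T (\<lambda>\<omega>. (Y \<omega>, D \<omega>, Z \<omega>))"
  proof (rule measure_eqI)
    show "sets (distr N ?T (\<lambda>x. (Yt x, Dt x, Zt x))) = sets (distr M ?T (\<lambda>\<omega>. (Y \<omega>, D \<omega>, Z \<omega>)))" by simp
    fix X assume "X \<in> sets (distr N ?T (\<lambda>x. (Yt x, Dt x, Zt x)))"
    then have X: "X \<in> sets ?T" by simp
    have Ss: "(\<lambda>x. (Yt x, Dt x, Zt x)) -` X \<inter> space N \<in> sets (M \<Otimes>\<^sub>M C)"
      using measurable_sets[OF fN X] sN by simp
    have "measure N ((\<lambda>x. (Yt x, Dt x, Zt x)) -` X \<inter> space N) = (\<integral>\<omega>. indicator X (Y \<omega>, D \<omega>, Z \<omega>) \<partial>M)"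
      unfolding NE[OF Ss]
    proof (intro Bochner_Integration.integral_cong refl)
      fix \<omega> assume w: "\<omega> \<in> space M"
      have "(\<Sum>ab\<in>UNIV. wf Y D a b \<omega> ab * indicator ((\<lambda>x. (Yt x, Dt x, Zt x)) -` X \<inter> space N) (\<omega>, ab))
          = (\<Sum>ab\<in>UNIV. wf Y D a b \<omega> ab * indicator X (Y \<omega>, D \<omega>, Z \<omega>))"
        using w by (intro sum.cong refl) (simp add: indicator_def Yt_def Dt_def Zt_def spN)
      also have "\<dots> = indicator X (Y \<omega>, D \<omega>, Z \<omega>)"
        by (simp add: sum_distrib_right[symmetric] wf_sum)
      finally show "(\<Sum>ab\<in>UNIV. wf Y D a b \<omega> ab * indicator ((\<lambda>x. (Yt x, Dt x, Zt x)) -` X \<inter> space N) (\<omega>, ab))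
          = indicator X (Y \<omega>, D \<omega>, Z \<omega>)" .
    qed
    also have "\<dots> = measure M ((\<lambda>\<omega>. (Y \<omega>, D \<omega>, Z \<omega>)) -` X \<inter> space M)"
      by (rule integral_ind_comp[OF P fM X])
    finally have eq: "measure N ((\<lambda>x. (Yt x, Dt x, Zt x)) -` X \<inter> space N) = measure M ((\<lambda>\<omega>. (Y \<omega>, D \<omega>, Z \<omega>)) -` X \<inter> space M)" .
    show "emeasure (distr N ?T (\<lambda>x. (Yt x, Dt x, Zt x))) X = emeasure (distr M ?T (\<lambda>\<omega>. (Y \<omega>, D \<omega>, Z \<omega>))) X"
      using eq fN fM X by (simp add: emeasure_distr PN.emeasure_eq_measure emeasure_eq_measure measurable_sets)
  qed
  show ?thesis
    apply (rule exI[of _ N], rule exI[of _ Yt], rule exI[of _ Dt], rule exI[of _ Zt], rule exI[of _ Y0], rule exI[of _ Y1])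
    unfolding mNeq using NP mYt mDt mZt mY0 mY1 distrEq indN royN pN by blast
qed


theorem corollary1:
  fixes M :: "'a measure"
    and Y D :: "'a \<Rightarrow> bool"
    and Z :: "'a \<Rightarrow> 'z::euclidean_space"
    and g10 g11 :: "'z \<Rightarrow> real"
  assumes "prob_space M"
    and "Y \<in> measurable M (count_space UNIV)"
    and "D \<in> measurable M (count_space UNIV)"
    and "Z \<in> borel_measurable M"
    and "cond_prob_version M Z {\<omega>\<in>space M. Y \<omega> \<and> \<not> D \<omega>} g10"
    and "cond_prob_version M Z {\<omega>\<in>space M. Y \<omega> \<and> D \<omega>} g11"
  shows
    "(\<forall>Y0 Y1 :: 'a \<Rightarrow> bool.
        Y0 \<in> measurable M (count_space UNIV) \<and> Y1 \<in> measurable M (count_space UNIV) \<and>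
        indep_rv M (count_space UNIV) (\<lambda>\<omega>. (Y0 \<omega>, Y1 \<omega>)) borel Z \<and>
        (roy_model M Y D Y0 Y1 \<or>
         (\<exists>Y0s Y1s :: 'a \<Rightarrow> real. Y0s \<in> borel_measurable M \<and> Y1s \<in> borel_measurable M \<and>
            alt_roy_model M Y D Y0 Y1 Y0s Y1s))
        \<longrightarrow>
        (AE z in distr M borel Z. z \<in> rv_support M Z \<longrightarrow>
            0 \<le> measure M {\<omega>\<in>space M. Y0 \<omega> \<and> \<not> Y1 \<omega>} \<and>
            measure M {\<omega>\<in>space M. Y0 \<omega> \<and> \<not> Y1 \<omega>} \<le> g10 z \<and>
            0 \<le> measure M {\<omega>\<in>space M. \<not> Y0 \<omega> \<and> Y1 \<omega>} \<and>
            measure M {\<omega>\<in>space M. \<not> Y0 \<omega> \<and> Y1 \<omega>} \<le> g11 z) \<and>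
        measure M {\<omega>\<in>space M. \<not> Y0 \<omega> \<and> \<not> Y1 \<omega>} = measure M {\<omega>\<in>space M. \<not> Y \<omega>})
    \<and>
    (indep_rv M (count_space UNIV) Y borel Z \<longrightarrow>
      (\<forall>p00 p01 p10 :: real.
        (AE z in distr M borel Z. z \<in> rv_support M Z \<longrightarrow>
            0 \<le> p10 \<and> p10 \<le> g10 z \<and> 0 \<le> p01 \<and> p01 \<le> g11 z) \<and>
        p00 = measure M {\<omega>\<in>space M. \<not> Y \<omega>}
        \<longrightarrow>
        (\<exists>(N :: ('a \<times> bool \<times> bool) measure) Yt Dt Zt Y0 Y1.
            prob_space N \<and>
            Yt \<in> measurable N (count_space UNIV) \<and> Dt \<in> measurable N (count_space UNIV) \<and>
            Zt \<in> borel_measurable N \<and>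
            Y0 \<in> measurable N (count_space UNIV) \<and> Y1 \<in> measurable N (count_space UNIV) \<and>
            distr N (count_space UNIV \<Otimes>\<^sub>M count_space UNIV \<Otimes>\<^sub>M borel) (\<lambda>\<omega>. (Yt \<omega>, Dt \<omega>, Zt \<omega>)) =
              distr M (count_space UNIV \<Otimes>\<^sub>M count_space UNIV \<Otimes>\<^sub>M borel) (\<lambda>\<omega>. (Y \<omega>, D \<omega>, Z \<omega>)) \<and>
            indep_rv N (count_space UNIV) (\<lambda>\<omega>. (Y0 \<omega>, Y1 \<omega>)) borel Zt \<and>
            roy_model N Yt Dt Y0 Y1 \<and>
            measure N {\<omega>\<in>space N. \<not> Y0 \<omega> \<and> \<not> Y1 \<omega>} = p00 \<and>
            measure N {\<omega>\<in>space N. \<not> Y0 \<omega> \<and> Y1 \<omega>} = p01 \<and>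
            measure N {\<omega>\<in>space N. Y0 \<omega> \<and> \<not> Y1 \<omega>} = p10)))"
  apply (rule conjI)
   apply (intro allI impI)
   apply (elim conjE disjE exE)
    apply (rule part1[OF assms], assumption+)
   apply (rule part1[OF assms], assumption+)
   apply (rule alt_roy, assumption)
  apply (intro allI impI)
  apply (elim conjE)
  apply (rule part2[OF assms(1-6)], assumption+)
  done

end
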